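(* Let $\mathcal{X}=[-1,1]^2$ with $\boldsymbol{\mu}$ the uniform probability distribution on $\mathcal{X}$. For $\epsilon\in(0,1)$ let $A=[-1,-\epsilon]\times[-1,1]$, $B=[-\epsilon,\epsilon]\times[-1,1]$, $C=[\epsilon,1]\times[-1,1]$, so that $\mathcal{P}=\{A,B,C\}$ is a partition of $\mathcal{X}$ (up to boundaries of measure zero). For $\omega>0$ define $f:\mathcal{X}\to\mathbb{R}$ by $$ f(\mathbf{x})=\begin{cases} x_1+\epsilon, & \mathbf{x}\in A,\\ x_1(x_1+\epsilon)(x_1-\epsilon)\cos(\omega x_2), & \mathbf{x}\in B,\\ x_1-\epsilon, & \mathbf{x}\in C,\end{cases}$$ and take the local reduced dimension map $r(A)=r(B)=r(C)=1$. Then there exist $\epsilon>0$ and $\omega>0$ such that $$\mathbb{E}_{\boldsymbol{\mu}}\big[\|f-R_{AS}(r,f,\boldsymbol{\mu})\|^2\big]\;\geq\;\mathbb{E}_{\boldsymbol{\mu}}\big[\|f-\mathbb{E}_{\boldsymbol{\mu}}[f\mid P_{1,\mathcal{X}}]\|^2\big],$$ where $R_{AS}(r,f,\boldsymbol{\mu})$ is the local ridge approximation with active subspaces of $(f,\boldsymbol{\mu})$ with respect to $\mathcal{P}$ and $r$, and $P_{1,\mathcal{X}}$ is the optimal rank-one projector on the whole domain $\mathcal{X}$.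
   Context: For a subdomain $S\subseteq\mathcal{X}$ with $\boldsymbol{\mu}(S)>0$, let $\boldsymbol{\mu}_S=\boldsymbol{\mu}|_S/\boldsymbol{\mu}(S)$ be the normalized restriction. The optimal rank-$r$ projector on $S$ is an orthogonal projector $P_{r,S}:\mathbb{R}^n\to\mathbb{R}^n$ solving $$P_{r,S}=\operatorname{argmin}_{P^2=P,\;P=P^T,\;\operatorname{rank}(P)=r}\;\mathbb{E}_{\boldsymbol{\mu}_S}\|(\mathrm{Id}-P)\nabla f\|^2,$$ where $\nabla f$ is the (almost everywhere defined) gradient of $f$. For a projector $P$ and a probability measure $\nu$, $\mathbb{E}_{\nu}[f\mid P]$ denotes the conditional expectation of $f$ under $\nu$ given the $\sigma$-algebra generated by $\mathbf{x}\mapsto P\mathbf{x}$. Given a partition $\mathcal{P}=\{S_i\}$ of the domain and a map $r:\mathcal{P}\to\{1,\dots,n_r\}$, the local ridge approximation with active subspaces $R_{AS}(r,f,\boldsymbol{\mu})$ is the function defined on each $S_i$ by $R_{AS}(r,f,\boldsymbol{\mu})|_{S_i}=\mathbb{E}_{\boldsymbol{\mu}_{S_i}}[f\mid P_{r(S_i),S_i}]$. Here $P_{1,\mathcal{X}}$ is the optimal rank-one projector with $S=\mathcal{X}$ (and $\boldsymbol{\mu}_{\mathcal{X}}=\boldsymbol{\mu}$). *)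

theory Defs
  imports "HOL-Analysis.Analysis" "HOL-Probability.Probability"
begin

text \<open>Gradient of a scalar field on R^n (defined where f is Frechet differentiable,
  set to 0 elsewhere, which is a null set in the application).\<close>
definition grad :: "(real^'n \<Rightarrow> real) \<Rightarrow> real^'n \<Rightarrow> real^'n" where
  "grad f x = (if f differentiable (at x)
               then (\<chi> i. frechet_derivative f (at x) (axis i 1)) else 0)"

definition orth_proj :: "nat \<Rightarrow> real^'n^'n \<Rightarrow> bool" where
  "orth_proj r P \<longleftrightarrow> P ** P = P \<and> transpose P = P \<and> rank P = r"

definition restr_norm :: "'a measure \<Rightarrow> 'a set \<Rightarrow> 'a measure" where
  "restr_norm \<mu> S = uniform_measure \<mu> S"

definition proj_loss :: "(real^'n) measure \<Rightarrow> (real^'n) set \<Rightarrow> (real^'n \<Rightarrow> real) \<Rightarrow> real^'n^'n \<Rightarrow> real" where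
  "proj_loss \<mu> S f P = (\<integral>x. (norm ((mat 1 - P) *v grad f x))\<^sup>2 \<partial>(restr_norm \<mu> S))"

definition opt_proj :: "(real^'n) measure \<Rightarrow> (real^'n) set \<Rightarrow> nat \<Rightarrow> (real^'n \<Rightarrow> real) \<Rightarrow> real^'n^'n \<Rightarrow> bool" where
  "opt_proj \<mu> S r f P \<longleftrightarrow> orth_proj r P \<and>
     (\<forall>Q. orth_proj r Q \<longrightarrow> proj_loss \<mu> S f P \<le> proj_loss \<mu> S f Q)"

definition proj_sigma :: "(real^'n) measure \<Rightarrow> real^'n^'n \<Rightarrow> (real^'n) measure" where
  "proj_sigma \<nu> P = vimage_algebra (space \<nu>) (\<lambda>x. P *v x) borel"

definition cond_exp_proj :: "(real^'n) measure \<Rightarrow> (real^'n \<Rightarrow> real) \<Rightarrow> real^'n^'n \<Rightarrow> real^'n \<Rightarrow> real" where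
  "cond_exp_proj \<nu> f P = real_cond_exp \<nu> (proj_sigma \<nu> P) f"

definition X2 :: "(real^2) set" where
  "X2 = cbox (vector [-1, -1]) (vector [1, 1])"

definition mu2 :: "(real^2) measure" where
  "mu2 = uniform_measure lborel X2"

definition SetA :: "real \<Rightarrow> (real^2) set" where
  "SetA \<epsilon> = cbox (vector [-1, -1]) (vector [-\<epsilon>, 1])"
definition SetB :: "real \<Rightarrow> (real^2) set" where
  "SetB \<epsilon> = cbox (vector [-\<epsilon>, -1]) (vector [\<epsilon>, 1])"
definition SetC :: "real \<Rightarrow> (real^2) set" where
  "SetC \<epsilon> = cbox (vector [\<epsilon>, -1]) (vector [1, 1])"

text \<open>The function f (on the common boundaries the pieces agree).\<close>
definition fex :: "real \<Rightarrow> real \<Rightarrow> real^2 \<Rightarrow> real" where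
  "fex \<epsilon> \<omega> x = (if x$1 \<le> -\<epsilon> then x$1 + \<epsilon>
                  else if x$1 < \<epsilon> then x$1 * (x$1 + \<epsilon>) * (x$1 - \<epsilon>) * cos (\<omega> * x$2)
                  else x$1 - \<epsilon>)"

text \<open>Local ridge approximation for the partition {A,B,C} with given projectors
  on A, B, C (boundaries, a null set, are assigned to A resp. C).\<close>
definition RAS :: "real \<Rightarrow> (real^2 \<Rightarrow> real) \<Rightarrow> real^2^2 \<Rightarrow> real^2^2 \<Rightarrow> real^2^2 \<Rightarrow> real^2 \<Rightarrow> real" where
  "RAS \<epsilon> f PA PB PC x =
     (if x$1 \<le> -\<epsilon> then cond_exp_proj (restr_norm mu2 (SetA \<epsilon>)) f PA x
      else if x$1 < \<epsilon> then cond_exp_proj (restr_norm mu2 (SetB \<epsilon>)) f PB x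
      else cond_exp_proj (restr_norm mu2 (SetC \<epsilon>)) f PC x)"

end

theory Submission
  imports Defs
begin

definition refl2 :: "real^2 \<Rightarrow> real^2" where "refl2 x = vector [- x$1, x$2]"

lemma refl2_simps[simp]: "refl2 x $ 1 = - x$1" "refl2 x $ 2 = x$2" "refl2 (refl2 x) = x"
  by (auto simp: refl2_def vec_eq_iff forall_2)

lemma refl2_meas[measurable]: "refl2 \<in> borel_measurable borel"
proof -
  have "refl2 = (\<lambda>x. x - (2 * x$1) *\<^sub>R axis 1 1)"
    by (auto simp: refl2_def vec_eq_iff forall_2 axis_def)
  moreover have "continuous_on UNIV (\<lambda>x::real^2. x - (2 * x$1) *\<^sub>R axis 1 1)"
    by (intro continuous_intros)
  ultimately show ?thesis by (metis borel_measurable_continuous_onI)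
qed

lemma Basis_real2: "(b::real^2) \<in> Basis \<longleftrightarrow> b = axis 1 1 \<or> b = axis 2 1"
  by (auto simp: Basis_vec_def) (metis exhaust_2)

lemma distr_lborel_refl2: "distr lborel borel refl2 = lborel"
proof (rule lborel_eqI[symmetric])
  fix l u :: "real^2" assume le: "\<And>b. b\<in>Basis \<Longrightarrow> l\<bullet>b \<le> u\<bullet>b"
  then have le1: "l$1 \<le> u$1" and le2: "l$2 \<le> u$2"
    using le[of "axis 1 1"] le[of "axis 2 1"] by (auto simp: Basis_real2 inner_axis)
  define l' :: "real^2" where "l' = vector [-u$1, l$2]"
  define u' :: "real^2" where "u' = vector [-l$1, u$2]"
  have pre: "refl2 -` box l u = box l' u'"
    by (auto simp: mem_box_cart forall_2 l'_def u'_def)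
  have "u' - l' = u - l" by (auto simp: vec_eq_iff forall_2 l'_def u'_def)
  moreover have "\<And>b. b\<in>Basis \<Longrightarrow> l'\<bullet>b \<le> u'\<bullet>b"
    using le1 le2 by (auto simp: Basis_real2 inner_axis l'_def u'_def)
  ultimately show "emeasure (distr lborel borel refl2) (box l u) = (\<Prod>b\<in>Basis. (u - l) \<bullet> b)"
    by (simp add: emeasure_distr pre)
qed simp

lemma distr_unif_refl2:
  assumes K: "K \<in> sets borel" and sym: "refl2 -` K = K"
  shows "distr (uniform_measure lborel K) borel refl2 = uniform_measure lborel K"
proof (rule measure_eqI)
  show "sets (distr (uniform_measure lborel K) borel refl2) = sets (uniform_measure lborel K)" by simp
  fix A assume "A \<in> sets (distr (uniform_measure lborel K) borel refl2)"
  then have A[measurable]: "A \<in> sets borel" by simp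
  have "K \<inter> refl2 -` A = refl2 -` (K \<inter> A)" by (metis sym vimage_Int)
  then have "emeasure lborel (K \<inter> refl2 -` A) = emeasure (distr lborel borel refl2) (K \<inter> A)"
    using K by (subst emeasure_distr) auto
  also have "\<dots> = emeasure lborel (K \<inter> A)" by (simp add: distr_lborel_refl2)
  finally have eq: "emeasure lborel (K \<inter> refl2 -` A) = emeasure lborel (K \<inter> A)" .
  have "refl2 -` A \<in> sets borel" using measurable_sets[OF refl2_meas A] by simp
  then show "emeasure (distr (uniform_measure lborel K) borel refl2) A = emeasure (uniform_measure lborel K) A"
    using K by (simp add: emeasure_distr eq)
qed

lemma integral_unif_refl2:
  fixes F :: "real^2 \<Rightarrow> real"
  assumes K: "K \<in> sets borel" and sym: "refl2 -` K = K" and F[measurable]: "F \<in> borel_measurable borel"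
  shows "(\<integral>x. F (refl2 x) \<partial>uniform_measure lborel K) = (\<integral>x. F x \<partial>uniform_measure lborel K)"
proof -
  have "(\<integral>x. F x \<partial>uniform_measure lborel K) = (\<integral>x. F x \<partial>distr (uniform_measure lborel K) borel refl2)"
    by (simp add: distr_unif_refl2[OF K sym])
  also have "\<dots> = (\<integral>x. F (refl2 x) \<partial>uniform_measure lborel K)"
  proof (rule integral_distr)
    have "measurable (uniform_measure lborel K) borel = measurable borel borel"
      by (rule measurable_cong_sets) simp_all
    then show "refl2 \<in> uniform_measure lborel K \<rightarrow>\<^sub>M borel" by simp
  qed simp
  finally show ?thesis by simp
qed

lemma integral_unif_odd:
  fixes F :: "real^2 \<Rightarrow> real"
  assumes K: "K \<in> sets borel" and sym: "refl2 -` K = K" and F[measurable]: "F \<in> borel_measurable borel"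
    and odd: "\<And>x. F (refl2 x) = - F x"
  shows "(\<integral>x. F x \<partial>uniform_measure lborel K) = 0"
  using integral_unif_refl2[OF K sym F] by (simp add: odd)

lemma unif_unif:
  assumes S[measurable]: "S \<in> sets borel" and X[measurable]: "X \<in> sets borel" and SX: "S \<subseteq> X"
    and X0: "emeasure lborel X \<noteq> 0" "emeasure lborel X \<noteq> \<infinity>" and S0: "emeasure lborel S \<noteq> 0"
  shows "uniform_measure (uniform_measure lborel X) S = uniform_measure lborel S"
proof (rule measure_eqI)
  show "sets (uniform_measure (uniform_measure lborel X) S) = sets (uniform_measure lborel S)" by simp
  fix A assume "A \<in> sets (uniform_measure (uniform_measure lborel X) S)"
  then have A[measurable]: "A \<in> sets borel" by simp
  have SXe: "X \<inter> S = S" using SX by auto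
  have XSA: "X \<inter> (S \<inter> A) = S \<inter> A" using SX by auto
  have Sfin: "emeasure lborel S \<noteq> \<infinity>"
    using neq_top_trans[of "emeasure lborel X" "emeasure lborel S"] emeasure_mono[of S X lborel] SX X0(2) by auto
  have "emeasure (uniform_measure (uniform_measure lborel X) S) A
      = (emeasure lborel (S \<inter> A) / emeasure lborel X) / (emeasure lborel S / emeasure lborel X)"
    by (simp add: SXe XSA)
  also have "\<dots> = emeasure lborel (S \<inter> A) / emeasure lborel S"
  proof -
    have SAfin: "emeasure lborel (S \<inter> A) \<noteq> \<infinity>"
      using neq_top_trans[of "emeasure lborel S" "emeasure lborel (S \<inter> A)"] emeasure_mono[of "S \<inter> A" S lborel] Sfin by auto
    have xp: "measure lborel X > 0" using X0 by (simp add: emeasure_eq_ennreal_measure measure_nonneg zero_less_measure_iff)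
    have sp: "measure lborel S > 0" using S0 Sfin by (simp add: emeasure_eq_ennreal_measure zero_less_measure_iff)
    show ?thesis
      using xp sp X0 Sfin SAfin
      by (simp add: emeasure_eq_ennreal_measure divide_ennreal measure_nonneg)
  qed
  finally show "emeasure (uniform_measure (uniform_measure lborel X) S) A = emeasure (uniform_measure lborel S) A"
    by simp
qed


lemma hd_nth: "((\<lambda>y::real^'n. y $ i) has_derivative (\<lambda>h. h $ i)) F"
  by (rule bounded_linear_imp_has_derivative[OF bounded_linear_vec_nth])

lemma hd_comp_nth:
  assumes "(\<phi> has_real_derivative d) (at (x $ i))"
  shows "((\<lambda>y::real^'n. \<phi> (y $ i)) has_derivative (\<lambda>h. d * h $ i)) (at x)"
proof -
  have "(\<phi> has_derivative (\<lambda>h. d * h)) (at (x $ i))" using assms by (simp add: has_field_derivative_def mult_commute_abs)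
  from has_derivative_compose[OF hd_nth this] show ?thesis by simp
qed

definition G :: "real \<Rightarrow> real \<Rightarrow> real^2 \<Rightarrow> real^2" where
  "G e w x = (if x$1 < -e \<or> e < x$1 then vector [1, 0]
     else if -e < x$1 \<and> x$1 < e then vector [(3*(x$1)^2 - e^2) * cos (w * x$2), - (x$1 * ((x$1)^2 - e^2)) * w * sin (w * x$2)]
     else 0)"

lemma grad_eq:
  fixes f :: "real^2 \<Rightarrow> real"
  assumes D: "(f has_derivative D) (at x)"
  shows "grad f x = vector [D (axis 1 1), D (axis 2 1)]"
proof -
  have "f differentiable (at x)" using D by (auto simp: differentiable_def)
  moreover have "frechet_derivative f (at x) = D" using frechet_derivative_at[OF D] by simp
  ultimately show ?thesis by (simp add: grad_def vec_eq_iff forall_2)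
qed

lemma deriv_left:
  assumes "x$1 < -e"
  shows "(fex e w has_derivative (\<lambda>h. h$1)) (at x)"
proof (rule has_derivative_transform_within_open)
  show "((\<lambda>y::real^2. y$1 + e) has_derivative (\<lambda>h. h$1)) (at x)"
    using has_derivative_add[OF hd_nth[of 1] has_derivative_const] by simp
  show "open {y::real^2. y$1 < -e}" by (intro open_Collect_less continuous_intros)
  show "x \<in> {y::real^2. y$1 < -e}" using assms by simp
  show "\<And>y. y \<in> {y::real^2. y$1 < -e} \<Longrightarrow> y$1 + e = fex e w y" by (simp add: fex_def)
qed

lemma deriv_right:
  assumes "e < x$1" "0 < e"
  shows "(fex e w has_derivative (\<lambda>h. h$1)) (at x)"
proof (rule has_derivative_transform_within_open)
  show "((\<lambda>y::real^2. y$1 - e) has_derivative (\<lambda>h. h$1)) (at x)"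
    using has_derivative_diff[OF hd_nth[of 1] has_derivative_const] by simp
  show "open {y::real^2. e < y$1}" by (intro open_Collect_less continuous_intros)
  show "x \<in> {y::real^2. e < y$1}" using assms by simp
  show "\<And>y. y \<in> {y::real^2. e < y$1} \<Longrightarrow> y$1 - e = fex e w y" using assms by (auto simp: fex_def)
qed

lemma deriv_mid:
  assumes "-e < x$1" "x$1 < e"
  shows "(fex e w has_derivative (\<lambda>h. (x$1 * (x$1 + e) * (x$1 - e)) * (- sin (w * x$2) * (w * h$2)) + ((3*(x$1)^2 - e^2) * h$1) * cos (w * x$2))) (at x)"
proof (rule has_derivative_transform_within_open)
  let ?p = "\<lambda>t::real. t * (t + e) * (t - e)"
  have p: "(?p has_real_derivative (3*(x$1)^2 - e^2)) (at (x$1))"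
    by (rule derivative_eq_intros refl)+ (simp add: power2_eq_square algebra_simps)
  have c: "((\<lambda>t. cos (w * t)) has_real_derivative (- sin (w * x$2) * w)) (at (x$2))"
    by (rule derivative_eq_intros refl)+ simp
  have "((\<lambda>y::real^2. ?p (y$1) * cos (w * y$2)) has_derivative
     (\<lambda>h. ?p (x$1) * ((- sin (w * x$2) * w) * h$2) + ((3*(x$1)^2 - e^2) * h$1) * cos (w * x$2))) (at x)"
    using has_derivative_mult[OF hd_comp_nth[OF p] hd_comp_nth[OF c]] by simp
  then show "((\<lambda>y::real^2. ?p (y$1) * cos (w * y$2)) has_derivative
     (\<lambda>h. (x$1 * (x$1 + e) * (x$1 - e)) * (- sin (w * x$2) * (w * h$2)) + ((3*(x$1)^2 - e^2) * h$1) * cos (w * x$2))) (at x)"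
    by (simp add: mult.assoc)
  show "open {y::real^2. -e < y$1 \<and> y$1 < e}" by (intro open_Collect_conj open_Collect_less continuous_intros)
  show "x \<in> {y::real^2. -e < y$1 \<and> y$1 < e}" using assms by simp
  show "\<And>y. y \<in> {y::real^2. -e < y$1 \<and> y$1 < e} \<Longrightarrow> ?p (y$1) * cos (w * y$2) = fex e w y"
    by (auto simp: fex_def)
qed


lemma two_sides:
  fixes g a b :: "real \<Rightarrow> real"
  assumes d: "((\<lambda>y. (g y - g 0)/(y - 0)) \<longlongrightarrow> L) (at 0)"
  and l: "\<forall>\<^sub>F t in at_left 0. (g t - g 0)/(t - 0) = a t" "(a \<longlongrightarrow> A) (at_left 0)"
  and r: "\<forall>\<^sub>F t in at_right 0. (g t - g 0)/(t - 0) = b t" "(b \<longlongrightarrow> B) (at_right 0)"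
  shows "A = B"
proof -
  have "((\<lambda>y. (g y - g 0)/(y - 0)) \<longlongrightarrow> L) (at_left 0)" by (rule tendsto_mono[OF _ d]) (simp add: at_le)
  then have "(a \<longlongrightarrow> L) (at_left 0)" using tendsto_cong[OF l(1)] by simp
  then have 1: "A = L" using tendsto_unique[OF _ l(2)] by simp
  have "((\<lambda>y. (g y - g 0)/(y - 0)) \<longlongrightarrow> L) (at_right 0)" by (rule tendsto_mono[OF _ d]) (simp add: at_le)
  then have "(b \<longlongrightarrow> L) (at_right 0)" using tendsto_cong[OF r(1)] by simp
  then have 2: "B = L" using tendsto_unique[OF _ r(2)] by simp
  show ?thesis using 1 2 by simp
qed

lemma nondiff:
  assumes e: "0 < e" "2 * e^2 < 1" and x: "x$1 = e \<or> x$1 = -e"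
  shows "\<not> fex e w differentiable (at x)"
proof
  assume "fex e w differentiable (at x)"
  then obtain D where D: "(fex e w has_derivative D) (at x)" by (auto simp: differentiable_def)
  have lin: "linear D" using D has_derivative_linear by blast
  define a :: "real^2" where "a = axis 1 1"
  define g where "g t = fex e w (x + t *\<^sub>R a)" for t
  have gam: "((\<lambda>t. x + t *\<^sub>R a) has_derivative (\<lambda>t. t *\<^sub>R a)) (at 0)"
    by (auto intro!: derivative_eq_intros)
  have D0: "(fex e w has_derivative D) (at (x + 0 *\<^sub>R a))" using D by simp
  have "(g has_derivative (\<lambda>t. D (t *\<^sub>R a))) (at 0)"
    unfolding g_def by (rule has_derivative_compose[OF gam D0])
  moreover have "(\<lambda>t. D (t *\<^sub>R a)) = (*) (D a)"
    using lin by (auto simp: linear_scale)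
  ultimately have "(g has_field_derivative (D a)) (at 0)"
    by (simp add: has_field_derivative_def)
  then have lim: "((\<lambda>y. (g y - g 0)/(y - 0)) \<longlongrightarrow> D a) (at 0)"
    by (simp add: has_field_derivative_iff)
  have gv: "g t = fex e w (vector [x$1 + t, x$2])" for t
    unfolding g_def a_def by (rule arg_cong[where f="fex e w"]) (auto simp: vec_eq_iff forall_2 axis_def)
  have "1 = 2 * e^2 * cos (w * x$2)"
    using x
  proof
    assume x1: "x$1 = e"
    have g0: "g 0 = 0" using e by (simp add: gv fex_def x1)
    show ?thesis
    proof (rule two_sides[OF lim, symmetric])
      have ev: "\<forall>\<^sub>F t in at_left 0. t \<in> {-e<..<0}" using e by (intro eventually_at_left_real) simp
      show "\<forall>\<^sub>F t in at_left 0. (g t - g 0)/(t - 0) = (e + t) * (2*e + t) * cos (w * x$2)"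
        using ev
        by eventually_elim (auto simp: g0 gv fex_def x1 field_simps)
      show "((\<lambda>t. (e + t) * (2*e + t) * cos (w * x$2)) \<longlongrightarrow> 2 * e^2 * cos (w * x$2)) (at_left 0)"
        by (auto intro!: tendsto_eq_intros simp: power2_eq_square)
      show "\<forall>\<^sub>F t in at_right 0. (g t - g 0)/(t - 0) = (\<lambda>_. 1) t"
        using eventually_at_right_less[of 0]
        by eventually_elim (use e in \<open>auto simp: g0 gv fex_def x1\<close>)
    qed simp
  next
    assume x1: "x$1 = -e"
    have g0: "g 0 = 0" using e by (simp add: gv fex_def x1)
    show ?thesis
    proof (rule two_sides[OF lim])
      have ev: "\<forall>\<^sub>F t in at_right 0. t \<in> {0<..<e}" using e by (intro eventually_at_right_real) simp
      show "\<forall>\<^sub>F t in at_right 0. (g t - g 0)/(t - 0) = (-e + t) * (-2*e + t) * cos (w * x$2)"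
        using ev
        by eventually_elim (auto simp: g0 gv fex_def x1 field_simps)
      show "((\<lambda>t. (-e + t) * (-2*e + t) * cos (w * x$2)) \<longlongrightarrow> 2 * e^2 * cos (w * x$2)) (at_right 0)"
        by (auto intro!: tendsto_eq_intros simp: power2_eq_square)
      have "\<forall>\<^sub>F t in at_left 0. t \<in> {-1<..<(0::real)}"
        by (intro eventually_at_left_real) simp
        then show "\<forall>\<^sub>F t in at_left 0. (g t - g 0)/(t - 0) = (\<lambda>_. 1) t"
        by eventually_elim (use e in \<open>auto simp: g0 gv fex_def x1\<close>)
    qed simp
  qed
  moreover have "2 * e^2 * cos (w * x$2) \<le> 2 * e^2"
    using cos_le_one[of "w * x$2"] by (simp add: mult_left_le)
  ultimately show False using e by simp
qed


lemma grad_fex: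
  assumes e: "0 < e" "2 * e^2 < 1"
  shows "grad (fex e w) x = G e w x"
proof -
  consider "x$1 < -e" | "e < x$1" | "-e < x$1 \<and> x$1 < e" | "x$1 = e \<or> x$1 = -e" by linarith
  then show ?thesis
  proof cases
    case 1
    then show ?thesis using e by (simp add: grad_eq[OF deriv_left[OF 1]] G_def axis_def)
  next
    case 2
    then show ?thesis using e by (simp add: grad_eq[OF deriv_right[OF 2 e(1)]] G_def axis_def)
  next
    case 3
    then show ?thesis using e
      by (simp add: grad_eq[OF deriv_mid] G_def vec_eq_iff forall_2 axis_def power2_eq_square algebra_simps)
  next
    case 4
    then show ?thesis using e nondiff[OF e 4, of w] by (auto simp: grad_def G_def)
  qed
qed


lemma norm2_sq: "(norm (x::real^2))^2 = (x$1)^2 + (x$2)^2"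
  by (simp add: norm_vec_def L2_set_def sum_2)

definition E1 :: "real^2^2" where "E1 = vector [vector [1, 0], vector [0, 0]]"
definition E2 :: "real^2^2" where "E2 = vector [vector [0, 0], vector [0, 1]]"

lemma orth_E1: "orth_proj 1 E1"
proof -
  have sq: "E1 ** E1 = E1" by (simp add: E1_def matrix_matrix_mult_def vec_eq_iff forall_2 sum_2)
  have tr: "transpose E1 = E1" by (simp add: E1_def transpose_def vec_eq_iff forall_2)
  have "rank E1 \<noteq> 0" by (simp add: rank_eq_0 E1_def vec_eq_iff forall_2 exI[of _ 1])
  moreover have "rank E1 < CARD(2)" using det_eq_0_rank[of E1] by (simp add: det_2 E1_def)
  ultimately have "rank E1 = 1" by simp
  then show ?thesis using sq tr by (simp add: orth_proj_def)
qed

lemma orth_E2: "orth_proj 1 E2"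
proof -
  have sq: "E2 ** E2 = E2" by (simp add: E2_def matrix_matrix_mult_def vec_eq_iff forall_2 sum_2)
  have tr: "transpose E2 = E2" by (simp add: E2_def transpose_def vec_eq_iff forall_2)
  have "rank E2 \<noteq> 0" by (simp add: rank_eq_0 E2_def vec_eq_iff forall_2 exI[of _ 2])
  moreover have "rank E2 < CARD(2)" using det_eq_0_rank[of E2] by (simp add: det_2 E2_def)
  ultimately have "rank E2 = 1" by simp
  then show ?thesis using sq tr by (simp add: orth_proj_def)
qed

lemma orth_facts:
  fixes P :: "real^2^2"
  assumes "orth_proj 1 P"
  shows "P$2$1 = P$1$2" "P$1$1 + P$2$2 = 1" "P$1$1 = (P$1$1)^2 + (P$1$2)^2" "P$2$2 = (P$2$2)^2 + (P$1$2)^2"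
proof -
  have sq: "P ** P = P" and tr: "transpose P = P" and rk: "rank P = 1" using assms by (auto simp: orth_proj_def)
  show q: "P$2$1 = P$1$2" using arg_cong[OF tr, of "\<lambda>A. A$1$2"] by (simp add: transpose_def)
  have e11: "(P$1$1)^2 + P$1$2 * P$2$1 = P$1$1" using arg_cong[OF sq, of "\<lambda>A. A$1$1"]
    by (simp add: matrix_matrix_mult_def sum_2 power2_eq_square)
  have e12: "P$1$1 * P$1$2 + P$1$2 * P$2$2 = P$1$2" using arg_cong[OF sq, of "\<lambda>A. A$1$2"]
    by (simp add: matrix_matrix_mult_def sum_2)
  have e22: "P$2$1 * P$1$2 + (P$2$2)^2 = P$2$2" using arg_cong[OF sq, of "\<lambda>A. A$2$2"]
    by (simp add: matrix_matrix_mult_def sum_2 power2_eq_square)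
  show p: "P$1$1 = (P$1$1)^2 + (P$1$2)^2" using e11 q by (simp add: power2_eq_square)
  show s: "P$2$2 = (P$2$2)^2 + (P$1$2)^2" using e22 q by (simp add: power2_eq_square)
  show "P$1$1 + P$2$2 = 1"
  proof (cases "P$1$2 = 0")
    case False
    have "P$1$2 * (P$1$1 + P$2$2) = P$1$2 * 1" using e12 by (simp add: algebra_simps)
    then show ?thesis using False mult_left_cancel[OF False] by blast
  next
    case True
    then have p01: "P$1$1 = 0 \<or> P$1$1 = 1" and s01: "P$2$2 = 0 \<or> P$2$2 = 1" using p s
      by (auto simp: power2_eq_square)
    have "P$1$1 \<noteq> 0 \<or> P$2$2 \<noteq> 0"
    proof (rule ccontr)
      assume "\<not> ?thesis"
      then have "P = 0" using True q by (simp add: vec_eq_iff forall_2)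
      then show False using rk by simp
    qed
    moreover have "P$1$1 \<noteq> 1 \<or> P$2$2 \<noteq> 1"
    proof (rule ccontr)
      assume "\<not> ?thesis"
      then have "P = mat 1" using True q by (simp add: vec_eq_iff forall_2 mat_def)
      then show False using rk rank_I[where 'n=2] by simp
    qed
    ultimately show ?thesis using p01 s01 by auto
  qed
qed

lemma norm_resid:
  fixes P :: "real^2^2" and g :: "real^2"
  assumes "orth_proj 1 P"
  shows "(norm ((mat 1 - P) *v g))^2 = P$2$2 * (g$1)^2 - 2 * P$1$2 * (g$1 * g$2) + P$1$1 * (g$2)^2"
proof -
  note f = orth_facts[OF assms]
  have s1: "1 - P$1$1 = P$2$2" and s2: "1 - P$2$2 = P$1$1" using f(2) by auto
  have c1: "((mat 1 - P) *v g)$1 = P$2$2 * g$1 - P$1$2 * g$2"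
    by (simp add: matrix_vector_mult_def sum_2 mat_def s1[symmetric] algebra_simps)
  have c2: "((mat 1 - P) *v g)$2 = P$1$1 * g$2 - P$1$2 * g$1"
    using f(1) by (simp add: matrix_vector_mult_def sum_2 mat_def s2[symmetric] algebra_simps)
  have "(P$2$2 * g$1 - P$1$2 * g$2)^2 + (P$1$1 * g$2 - P$1$2 * g$1)^2
      = ((P$2$2)^2 + (P$1$2)^2) * (g$1)^2 - 2 * P$1$2 * (P$1$1 + P$2$2) * (g$1 * g$2) + ((P$1$1)^2 + (P$1$2)^2) * (g$2)^2"
    by (simp add: power2_eq_square algebra_simps)
  also have "\<dots> = P$2$2 * (g$1)^2 - 2 * P$1$2 * (g$1 * g$2) + P$1$1 * (g$2)^2"
    using f by simp
  finally show ?thesis by (simp add: norm2_sq c1 c2)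
qed


lemma Basis_2: "(Basis :: (real^2) set) = {axis 1 1, axis 2 1}"
  using Basis_real2 by auto

lemma emeasure_cbox2:
  fixes a b :: "real^2"
  assumes "a$1 \<le> b$1" "a$2 \<le> b$2"
  shows "emeasure lborel (cbox a b) = ennreal ((b$1 - a$1) * (b$2 - a$2))"
  using assms by (simp add: emeasure_lborel_cbox_eq Basis_2 inner_axis axis_eq_axis)

lemma measure_cbox2:
  fixes a b :: "real^2"
  assumes "a$1 \<le> b$1" "a$2 \<le> b$2"
  shows "measure lborel (cbox a b) = (b$1 - a$1) * (b$2 - a$2)"
  using emeasure_cbox2[OF assms] assms by (simp add: measure_def)

lemma mem_cbox2: "(x::real^2) \<in> cbox (vector [a1, a2]) (vector [b1, b2]) \<longleftrightarrow> a1 \<le> x$1 \<and> x$1 \<le> b1 \<and> a2 \<le> x$2 \<and> x$2 \<le> (b2::real)"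
  by (simp add: mem_box_cart forall_2)

lemma X2_mem: "x \<in> X2 \<longleftrightarrow> -1 \<le> x$1 \<and> x$1 \<le> 1 \<and> -1 \<le> x$2 \<and> x$2 \<le> 1"
  by (simp add: X2_def mem_cbox2)
lemma SetA_mem: "x \<in> SetA e \<longleftrightarrow> -1 \<le> x$1 \<and> x$1 \<le> -e \<and> -1 \<le> x$2 \<and> x$2 \<le> 1"
  by (simp add: SetA_def mem_cbox2)
lemma SetB_mem: "x \<in> SetB e \<longleftrightarrow> -e \<le> x$1 \<and> x$1 \<le> e \<and> -1 \<le> x$2 \<and> x$2 \<le> 1"
  by (simp add: SetB_def mem_cbox2)
lemma SetC_mem: "x \<in> SetC e \<longleftrightarrow> e \<le> x$1 \<and> x$1 \<le> 1 \<and> -1 \<le> x$2 \<and> x$2 \<le> 1"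
  by (simp add: SetC_def mem_cbox2)

lemma sets_boxes[measurable]: "X2 \<in> sets borel" "SetA e \<in> sets borel" "SetB e \<in> sets borel" "SetC e \<in> sets borel"
  by (simp_all add: X2_def SetA_def SetB_def SetC_def)

lemma emeasure_X2: "emeasure lborel X2 = 4"
  unfolding X2_def by (subst emeasure_cbox2) auto
lemma emeasure_SetA: "e < 1 \<Longrightarrow> emeasure lborel (SetA e) = ennreal (2 * (1 - e))"
  unfolding SetA_def by (subst emeasure_cbox2) (auto simp: algebra_simps)
lemma emeasure_SetB: "0 < e \<Longrightarrow> emeasure lborel (SetB e) = ennreal (4 * e)"
  unfolding SetB_def by (subst emeasure_cbox2) (auto simp: algebra_simps)
lemma emeasure_SetC: "e < 1 \<Longrightarrow> emeasure lborel (SetC e) = ennreal (2 * (1 - e))"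
  unfolding SetC_def by (subst emeasure_cbox2) (auto simp: algebra_simps)

lemma refl2_X2: "refl2 -` X2 = X2" by (auto simp: X2_mem)
lemma refl2_SetB: "refl2 -` SetB e = SetB e" by (auto simp: SetB_mem)

lemma fex_odd: "0 < e \<Longrightarrow> fex e w (refl2 x) = - fex e w x"
  by (auto simp: fex_def algebra_simps)


lemma meas_unif: "f \<in> borel_measurable borel \<Longrightarrow> f \<in> borel_measurable (uniform_measure lborel K)"
  by (simp add: measurable_cong_sets[of "uniform_measure lborel K" borel])

lemma meas_unif_iff: "f \<in> borel_measurable (uniform_measure lborel K) \<longleftrightarrow> f \<in> borel_measurable borel"
  by (simp add: measurable_cong_sets[of "uniform_measure lborel K" borel])

lemma AE_unif: "K \<in> sets borel \<Longrightarrow> (\<And>x. x \<in> K \<Longrightarrow> P x) \<Longrightarrow> AE x in uniform_measure lborel K. P x"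
  by (rule AE_uniform_measureI) auto

lemma prob_unif:
  assumes "emeasure lborel K \<noteq> 0" "emeasure lborel K \<noteq> \<infinity>"
  shows "prob_space (uniform_measure lborel K)"
  using prob_space_uniform_measure[OF assms] .

lemma integrable_unif:
  fixes F :: "real^2 \<Rightarrow> real"
  assumes K: "K \<in> sets borel" "emeasure lborel K \<noteq> 0" "emeasure lborel K \<noteq> \<infinity>"
    and F: "F \<in> borel_measurable borel" and B: "AE x in uniform_measure lborel K. \<bar>F x\<bar> \<le> B"
  shows "integrable (uniform_measure lborel K) F"
proof -
  interpret prob_space "uniform_measure lborel K" using prob_unif[OF K(2,3)] .
  show ?thesis using B by (intro integrable_const_bound[where B=B]) (auto simp: meas_unif F)
qed

lemma AE_unif_transfer:
  assumes S: "S \<in> sets borel" "emeasure lborel S \<noteq> 0" "emeasure lborel S \<noteq> \<infinity>"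
    and X: "X \<in> sets borel"
    and P: "AE x in uniform_measure lborel S. P x"
  shows "AE x in uniform_measure lborel X. x \<in> S \<longrightarrow> P x"
proof -
  have "AE x in lborel. x \<in> S \<longrightarrow> P x"
    using P AE_uniform_measure[of lborel S P] S by (simp add: less_top)
  then show ?thesis by (intro AE_uniform_measureI) (auto simp: X elim: AE_mp)
qed

lemma G1: "G e w x $ 1 = (if x$1 < -e \<or> e < x$1 then 1 else if -e < x$1 \<and> x$1 < e then (3*(x$1)^2 - e^2)*cos(w*x$2) else 0)"
  by (simp add: G_def)
lemma G2: "G e w x $ 2 = (if x$1 < -e \<or> e < x$1 then 0 else if -e < x$1 \<and> x$1 < e then - (x$1 * ((x$1)^2 - e^2)) * w * sin (w * x$2) else 0)"
  by (simp add: G_def)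

lemma G1_meas[measurable]: "(\<lambda>x. G e w x $ 1) \<in> borel_measurable borel"
  unfolding G1 by measurable
lemma G2_meas[measurable]: "(\<lambda>x. G e w x $ 2) \<in> borel_measurable borel"
  unfolding G2 by measurable

lemma G1_even: "G e w (refl2 x) $ 1 = G e w x $ 1"
  unfolding G1 by auto
lemma G2_odd: "G e w (refl2 x) $ 2 = - G e w x $ 2"
  unfolding G2 by (auto simp: algebra_simps)


lemma G1_bound:
  assumes "0 < e" "e \<le> 1/100"
  shows "\<bar>G e w x $ 1\<bar> \<le> 1"
proof -
  have "\<bar>(3*(x$1)^2 - e^2)*cos(w*x$2)\<bar> \<le> 1" if "-e < x$1" "x$1 < e"
  proof -
    have sq: "(x$1)^2 \<le> e^2" using that by (intro power2_le_iff_abs_le[THEN iffD2]) auto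
    have "e^2 \<le> e * 1" using assms by (simp add: power2_eq_square mult_left_mono)
    then have "e^2 \<le> 1/2" using assms by simp
    then have a: "\<bar>3*(x$1)^2 - e^2\<bar> \<le> 1" using sq zero_le_power2[of "x$1"] zero_le_power2[of e] by linarith
    have "\<bar>(3*(x$1)^2 - e^2)*cos(w*x$2)\<bar> = \<bar>3*(x$1)^2 - e^2\<bar> * \<bar>cos(w*x$2)\<bar>" by (simp add: abs_mult)
    also have "\<dots> \<le> 1 * 1" using a abs_cos_le_one by (intro mult_mono) auto
    finally show ?thesis by simp
  qed
  then show ?thesis unfolding G1 by auto
qed

lemma G2_bound:
  assumes "0 < e" "0 \<le> w"
  shows "\<bar>G e w x $ 2\<bar> \<le> w * e^3"
proof -
  have "\<bar>- (x$1 * ((x$1)^2 - e^2)) * w * sin (w * x$2)\<bar> \<le> w * e^3" if "-e < x$1" "x$1 < e"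
  proof -
    have x1: "\<bar>x$1\<bar> \<le> e" using that by auto
    have sq: "(x$1)^2 \<le> e^2" using that by (intro power2_le_iff_abs_le[THEN iffD2]) auto
    have a: "\<bar>(x$1)^2 - e^2\<bar> \<le> e^2" using sq zero_le_power2[of "x$1"] by linarith
    have "\<bar>- (x$1 * ((x$1)^2 - e^2)) * w * sin (w * x$2)\<bar> = \<bar>x$1\<bar> * \<bar>(x$1)^2 - e^2\<bar> * w * \<bar>sin (w * x$2)\<bar>"
      using assms by (simp add: abs_mult)
    also have "\<dots> \<le> e * e^2 * w * 1"
      using x1 a abs_sin_le_one assms by (intro mult_mono) auto
    finally show ?thesis by (simp add: power3_eq_cube power2_eq_square algebra_simps)
  qed
  then show ?thesis unfolding G2 using assms by auto
qed


lemma abs_mult_le: "\<bar>a\<bar> \<le> A \<Longrightarrow> \<bar>b\<bar> \<le> B \<Longrightarrow> \<bar>a * b\<bar> \<le> A * (B::real)"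
  by (simp add: abs_mult mult_mono')

lemma abs_sq_le: "\<bar>a\<bar> \<le> A \<Longrightarrow> \<bar>a^2\<bar> \<le> A * (A::real)"
  using abs_mult_le[of a A a A] by (simp add: power2_eq_square)

lemma loss_formula:
  fixes P :: "real^2^2"
  assumes K: "K \<in> sets borel" "emeasure lborel K \<noteq> 0" "emeasure lborel K \<noteq> \<infinity>" "refl2 -` K = K"
    and e: "0 < e" "e \<le> 1/100" and w: "0 \<le> w" and P: "orth_proj 1 P"
  shows "(\<integral>x. (norm ((mat 1 - P) *v grad (fex e w) x))^2 \<partial>uniform_measure lborel K)
       = P$2$2 * (\<integral>x. (G e w x $ 1)^2 \<partial>uniform_measure lborel K) + P$1$1 * (\<integral>x. (G e w x $ 2)^2 \<partial>uniform_measure lborel K)"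
proof -
  let ?M = "uniform_measure lborel K"
  have "e^2 \<le> e * 1" using e by (simp add: power2_eq_square mult_left_mono)
  then have e2: "2 * e^2 < 1" using e by simp
  have pt: "(norm ((mat 1 - P) *v grad (fex e w) x))^2 =
      P$2$2 * (G e w x $ 1)^2 - 2 * P$1$2 * (G e w x $ 1 * G e w x $ 2) + P$1$1 * (G e w x $ 2)^2" for x
    by (simp add: grad_fex[OF e(1) e2] norm_resid[OF P])
  have b1: "\<bar>G e w x $ 1\<bar> \<le> 1" for x using G1_bound[OF e] .
  have b2: "\<bar>G e w x $ 2\<bar> \<le> w * e^3" for x using G2_bound[OF e(1) w] .
  have i1: "integrable ?M (\<lambda>x. (G e w x $ 1)^2)"
    by (rule integrable_unif[OF K(1-3), where B="1*1"]) (use abs_sq_le[OF b1] in auto)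
  have i2: "integrable ?M (\<lambda>x. (G e w x $ 2)^2)"
    by (rule integrable_unif[OF K(1-3), where B="(w*e^3)*(w*e^3)"]) (use abs_sq_le[OF b2] in auto)
  have i12: "integrable ?M (\<lambda>x. G e w x $ 1 * G e w x $ 2)"
    by (rule integrable_unif[OF K(1-3), where B="1*(w*e^3)"]) (use abs_mult_le[OF b1 b2] in auto)
  have z: "(\<integral>x. G e w x $ 1 * G e w x $ 2 \<partial>?M) = 0"
    by (rule integral_unif_odd[OF K(1) K(4)]) (auto simp: G1_even G2_odd)
  have "(\<integral>x. (norm ((mat 1 - P) *v grad (fex e w) x))^2 \<partial>?M) =
     (\<integral>x. P$2$2 * (G e w x $ 1)^2 - 2 * P$1$2 * (G e w x $ 1 * G e w x $ 2) + P$1$1 * (G e w x $ 2)^2 \<partial>?M)"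
    by (simp add: pt)
  also have "\<dots> = P$2$2 * (\<integral>x. (G e w x $ 1)^2 \<partial>?M) - 2 * P$1$2 * (\<integral>x. G e w x $ 1 * G e w x $ 2 \<partial>?M)
       + P$1$1 * (\<integral>x. (G e w x $ 2)^2 \<partial>?M)"
    using i1 i2 i12 by simp
  finally show ?thesis by (simp add: z)
qed


lemma E1_entries: "E1$1$1 = 1" "E1$1$2 = 0" "E1$2$1 = 0" "E1$2$2 = 0" by (simp_all add: E1_def)
lemma E2_entries: "E2$1$1 = 0" "E2$1$2 = 0" "E2$2$1 = 0" "E2$2$2 = 1" by (simp_all add: E2_def)

lemma mat_eqI2: "(P::real^2^2)$1$1 = Q$1$1 \<Longrightarrow> P$1$2 = Q$1$2 \<Longrightarrow> P$2$1 = Q$2$1 \<Longrightarrow> P$2$2 = Q$2$2 \<Longrightarrow> P = Q"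
  by (simp add: vec_eq_iff forall_2)

lemma opt_char1:
  fixes L :: "real^2^2 \<Rightarrow> real"
  assumes L: "\<And>P. orth_proj 1 P \<Longrightarrow> L P = P$2$2 * a + P$1$1 * b" and ab: "b < a"
  shows "\<forall>Q. orth_proj 1 Q \<longrightarrow> L E1 \<le> L Q"
    and "orth_proj 1 P \<Longrightarrow> \<forall>Q. orth_proj 1 Q \<longrightarrow> L P \<le> L Q \<Longrightarrow> P = E1"
proof -
  have LE1: "L E1 = b" using L[OF orth_E1] by (simp add: E1_entries)
  have key: "L Q - b = Q$2$2 * (a - b)" if "orth_proj 1 Q" for Q
  proof -
    have h: "Q$1$1 = 1 - Q$2$2" using orth_facts(2)[OF that] by simp
    have "L Q = Q$2$2 * a + (1 - Q$2$2) * b" using L[OF that] by (simp only: h)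
    then show ?thesis by (simp add: algebra_simps)
  qed
  have s0: "Q$2$2 \<ge> 0" if "orth_proj 1 Q" for Q :: "real^2^2"
    using orth_facts(4)[OF that] zero_le_power2[of "Q$2$2"] zero_le_power2[of "Q$1$2"] by linarith
  show "\<forall>Q. orth_proj 1 Q \<longrightarrow> L E1 \<le> L Q"
  proof (intro allI impI)
    fix Q :: "real^2^2" assume Q: "orth_proj 1 Q"
    have "0 \<le> Q$2$2 * (a - b)" using s0[OF Q] ab by simp
    then show "L E1 \<le> L Q" using key[OF Q] LE1 by simp
  qed
  assume P: "orth_proj 1 P" and opt: "\<forall>Q. orth_proj 1 Q \<longrightarrow> L P \<le> L Q"
  have "L P \<le> b" using opt orth_E1 LE1 by auto
  then have "P$2$2 * (a - b) \<le> 0" using key[OF P] by simp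
  then have s: "P$2$2 = 0" using s0[OF P] ab mult_pos_pos[of "P$2$2" "a - b"] by linarith
  then have q: "P$1$2 = 0" using orth_facts(4)[OF P] by simp
  have p: "P$1$1 = 1" using orth_facts(2)[OF P] s by simp
  show "P = E1" using s q p orth_facts(1)[OF P] by (intro mat_eqI2) (simp_all add: E1_entries)
qed

lemma opt_char2:
  fixes L :: "real^2^2 \<Rightarrow> real"
  assumes L: "\<And>P. orth_proj 1 P \<Longrightarrow> L P = P$2$2 * a + P$1$1 * b" and ab: "a < b"
  shows "\<forall>Q. orth_proj 1 Q \<longrightarrow> L E2 \<le> L Q"
    and "orth_proj 1 P \<Longrightarrow> \<forall>Q. orth_proj 1 Q \<longrightarrow> L P \<le> L Q \<Longrightarrow> P = E2"
proof -
  have LE2: "L E2 = a" using L[OF orth_E2] by (simp add: E2_entries)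
  have key: "L Q - a = Q$1$1 * (b - a)" if "orth_proj 1 Q" for Q
  proof -
    have h: "Q$2$2 = 1 - Q$1$1" using orth_facts(2)[OF that] by simp
    have "L Q = (1 - Q$1$1) * a + Q$1$1 * b" using L[OF that] by (simp only: h)
    then show ?thesis by (simp add: algebra_simps)
  qed
  have s0: "Q$1$1 \<ge> 0" if "orth_proj 1 Q" for Q :: "real^2^2"
    using orth_facts(3)[OF that] zero_le_power2[of "Q$1$1"] zero_le_power2[of "Q$1$2"] by linarith
  show "\<forall>Q. orth_proj 1 Q \<longrightarrow> L E2 \<le> L Q"
  proof (intro allI impI)
    fix Q :: "real^2^2" assume Q: "orth_proj 1 Q"
    have "0 \<le> Q$1$1 * (b - a)" using s0[OF Q] ab by simp
    then show "L E2 \<le> L Q" using key[OF Q] LE2 by simp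
  qed
  assume P: "orth_proj 1 P" and opt: "\<forall>Q. orth_proj 1 Q \<longrightarrow> L P \<le> L Q"
  have "L P \<le> a" using opt orth_E2 LE2 by auto
  then have "P$1$1 * (b - a) \<le> 0" using key[OF P] by simp
  then have s: "P$1$1 = 0" using s0[OF P] ab mult_pos_pos[of "P$1$1" "b - a"] by linarith
  then have q: "P$1$2 = 0" using orth_facts(3)[OF P] by simp
  have p: "P$2$2 = 1" using orth_facts(2)[OF P] s by simp
  show "P = E2" using s q p orth_facts(1)[OF P] by (intro mat_eqI2) (simp_all add: E2_entries)
qed


lemma subalg_proj:
  fixes P :: "real^2^2"
  shows "subalgebra (uniform_measure lborel K) (proj_sigma (uniform_measure lborel K) P)"
proof -
  have m: "(\<lambda>x. P *v x) \<in> borel_measurable borel"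
    by (intro borel_measurable_continuous_onI continuous_intros)
  have "sets (proj_sigma (uniform_measure lborel K) P) = {(\<lambda>x. P *v x) -` A \<inter> UNIV | A. A \<in> sets borel}"
    unfolding proj_sigma_def by (subst sets_vimage_algebra2) auto
  also have "\<dots> \<subseteq> sets borel" using measurable_sets[OF m] by auto
  finally show ?thesis unfolding subalgebra_def proj_sigma_def by simp
qed

lemma sfs_proj:
  fixes P :: "real^2^2"
  assumes "emeasure lborel K \<noteq> 0" "emeasure lborel K \<noteq> \<infinity>"
  shows "sigma_finite_subalgebra (uniform_measure lborel K) (proj_sigma (uniform_measure lborel K) P)"
proof -
  interpret prob_space "uniform_measure lborel K" using prob_unif[OF assms] .
  show ?thesis
    by (intro finite_measure_subalgebra_is_sigma_finite finite_measure_subalgebra.intro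
        finite_measure_subalgebra_axioms.intro subalg_proj) unfold_locales
qed

lemma abs_diff_sq_le: "\<bar>a\<bar> \<le> A \<Longrightarrow> \<bar>b\<bar> \<le> B \<Longrightarrow> \<bar>(a - b)^2\<bar> \<le> (A + B) * (A + (B::real))"
  by (rule abs_sq_le) linarith

lemma cond_exp_L2_min:
  fixes f g :: "'a \<Rightarrow> real"
  assumes sf: "sigma_finite_subalgebra M F" and fm: "finite_measure M"
    and f[measurable]: "f \<in> borel_measurable M" and fb: "AE x in M. \<bar>f x\<bar> \<le> B"
    and g[measurable]: "g \<in> borel_measurable F" and gb: "AE x in M. \<bar>g x\<bar> \<le> C"
  shows "(\<integral>x. (f x - real_cond_exp M F f x)^2 \<partial>M) \<le> (\<integral>x. (f x - g x)^2 \<partial>M)"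
proof -
  interpret sigma_finite_subalgebra M F by fact
  interpret finite_measure M by fact
  define h where "h = real_cond_exp M F f"
  have hF[measurable]: "h \<in> borel_measurable F" unfolding h_def by simp
  have hM[measurable]: "h \<in> borel_measurable M" unfolding h_def by simp
  have gM[measurable]: "g \<in> borel_measurable M" by (rule measurable_from_subalg[OF subalg g])
  have fi: "integrable M f" using fb by (intro integrable_const_bound[where B=B]) auto
  have h1: "AE x in M. h x \<le> B"
    unfolding h_def by (rule real_cond_exp_le_c[OF fi]) (use fb in \<open>auto elim: AE_mp\<close>)
  have h2: "AE x in M. -B \<le> h x"
    unfolding h_def by (rule real_cond_exp_ge_c[OF fi]) (use fb in \<open>auto elim: AE_mp\<close>)
  have hb: "AE x in M. \<bar>h x\<bar> \<le> B" using h1 h2 by eventually_elim auto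
  define d where "d x = h x - g x" for x
  have dF[measurable]: "d \<in> borel_measurable F" unfolding d_def by measurable
  have dM[measurable]: "d \<in> borel_measurable M" unfolding d_def by measurable
  have db: "AE x in M. \<bar>d x\<bar> \<le> B + C" using hb gb by eventually_elim (auto simp: d_def)
  have idf: "integrable M (\<lambda>x. d x * f x)"
    by (rule integrable_const_bound[where B="(B + C) * B"]) (use db fb in \<open>eventually_elim, auto intro: abs_mult_le\<close>)
  have idh: "integrable M (\<lambda>x. d x * h x)"
    by (rule integrable_const_bound[where B="(B + C) * B"]) (use db hb in \<open>eventually_elim, auto intro: abs_mult_le\<close>)
  have idd: "integrable M (\<lambda>x. (d x)^2)"
    by (rule integrable_const_bound[where B="(B + C) * (B + C)"]) (use db in \<open>eventually_elim, auto dest: abs_sq_le\<close>)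
  have "AE x in M. norm ((f x - h x)^2) \<le> (B + B) * (B + B)"
    using fb hb
  proof eventually_elim
    case (elim x)
    then show ?case using abs_diff_sq_le[of "f x" B "h x" B] by simp
  qed
  then have ifh: "integrable M (\<lambda>x. (f x - h x)^2)"
    by (intro integrable_const_bound[where B="(B + B) * (B + B)"]) auto
  have eq: "(\<integral>x. d x * h x \<partial>M) = (\<integral>x. d x * f x \<partial>M)"
    unfolding h_def by (rule real_cond_exp_intg(2)) (use idf in auto)
  have pt: "(f x - g x)^2 = (f x - h x)^2 + 2 * (d x * f x - d x * h x) + (d x)^2" for x
    by (simp add: d_def power2_eq_square algebra_simps)
  have "(\<integral>x. (f x - g x)^2 \<partial>M) = (\<integral>x. (f x - h x)^2 + 2 * (d x * f x - d x * h x) + (d x)^2 \<partial>M)"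
    by (simp add: pt)
  also have "\<dots> = (\<integral>x. (f x - h x)^2 \<partial>M) + 2 * ((\<integral>x. d x * f x \<partial>M) - (\<integral>x. d x * h x \<partial>M)) + (\<integral>x. (d x)^2 \<partial>M)"
    using idf idh idd ifh by simp
  also have "\<dots> = (\<integral>x. (f x - h x)^2 \<partial>M) + (\<integral>x. (d x)^2 \<partial>M)" by (simp add: eq)
  also have "\<dots> \<ge> (\<integral>x. (f x - h x)^2 \<partial>M)" by simp
  finally show ?thesis unfolding h_def by simp
qed


lemma unif_integral_le:
  fixes F :: "real^2 \<Rightarrow> real"
  assumes K: "emeasure lborel K \<noteq> 0" "emeasure lborel K \<noteq> \<infinity>"
    and F: "integrable (uniform_measure lborel K) F" and c: "AE x in uniform_measure lborel K. F x \<le> c"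
  shows "(\<integral>x. F x \<partial>uniform_measure lborel K) \<le> c"
proof -
  interpret prob_space "uniform_measure lborel K" using prob_unif[OF K] .
  have "(\<integral>x. F x \<partial>uniform_measure lborel K) \<le> (\<integral>x. c \<partial>uniform_measure lborel K)"
    by (rule integral_mono_AE[OF F _ c]) simp
  then show ?thesis using prob_space by simp
qed

lemma unif_integral_ge_box:
  fixes F :: "real^2 \<Rightarrow> real"
  assumes K: "emeasure lborel K \<noteq> 0" "emeasure lborel K \<noteq> \<infinity>"
    and F: "integrable (uniform_measure lborel K) F" and R: "R \<in> sets borel"
    and c: "AE x in uniform_measure lborel K. c * indicator R x \<le> F x"
  shows "c * measure (uniform_measure lborel K) R \<le> (\<integral>x. F x \<partial>uniform_measure lborel K)"
proof -
  interpret prob_space "uniform_measure lborel K" using prob_unif[OF K] .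
  have ii: "integrable (uniform_measure lborel K) (\<lambda>x. c * indicator R x)"
    using R by (intro integrable_mult_right integrable_indicator) (auto simp: less_top[symmetric])
  have "(\<integral>x. c * indicator R x \<partial>uniform_measure lborel K) \<le> (\<integral>x. F x \<partial>uniform_measure lborel K)"
    by (rule integral_mono_AE[OF ii F c])
  then show ?thesis by simp
qed

lemma sin_ge_half: "1 \<le> (t::real) \<Longrightarrow> t \<le> 2 \<Longrightarrow> 1/2 \<le> sin t"
proof -
  assume t: "1 \<le> t" "t \<le> 2"
  have p3: "3 < pi" using pi_gt3 .
  have p4: "pi < 4" using pi_less_4 .
  show ?thesis
  proof (cases "t \<le> pi/2")
    case True
    have "sin (pi/6) \<le> sin t" using t p3 p4 True by (intro sin_monotone_2pi_le) auto
    then show ?thesis by (simp add: sin_30)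
  next
    case False
    have "sin (pi/6) \<le> sin (pi - t)" using t p3 p4 False by (intro sin_monotone_2pi_le) auto
    then show ?thesis by (simp add: sin_30)
  qed
qed

lemma fex_bound: "0 < e \<Longrightarrow> e \<le> 1/100 \<Longrightarrow> x \<in> X2 \<Longrightarrow> \<bar>fex e w x\<bar> \<le> 1"
proof -
  assume e: "0 < e" "e \<le> 1/100" and x: "x \<in> X2"
  have "\<bar>x$1 * (x$1 + e) * (x$1 - e) * cos (w * x$2)\<bar> \<le> 1" if "-e < x$1" "x$1 < e"
  proof -
    have "\<bar>x$1\<bar> \<le> 1" "\<bar>x$1 + e\<bar> \<le> 1" "\<bar>x$1 - e\<bar> \<le> 1" "\<bar>cos (w * x$2)\<bar> \<le> 1" using that e by auto
    then have "\<bar>x$1 * (x$1 + e) * (x$1 - e) * cos (w * x$2)\<bar> \<le> 1 * 1 * 1 * 1"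
      by (intro abs_mult_le) auto
    then show ?thesis by simp
  qed
  then show ?thesis using x e by (auto simp: fex_def X2_mem)
qed


context
  fixes e w :: real
  assumes e0: "0 < e" and e1: "e \<le> 1/100" and w2: "2 \<le> w"
    and wB: "65536/9 < w * e^2" and wX: "w^2 * e^6 < (1 - 2*e)/2"
begin

lemma em_pos:
  "emeasure lborel X2 \<noteq> 0" "emeasure lborel X2 \<noteq> \<infinity>"
  "emeasure lborel (SetA e) \<noteq> 0" "emeasure lborel (SetA e) \<noteq> \<infinity>"
  "emeasure lborel (SetB e) \<noteq> 0" "emeasure lborel (SetB e) \<noteq> \<infinity>"
  "emeasure lborel (SetC e) \<noteq> 0" "emeasure lborel (SetC e) \<noteq> \<infinity>"
  using e0 e1 by (simp_all add: emeasure_X2 emeasure_SetA emeasure_SetB emeasure_SetC)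

lemma subs: "SetA e \<subseteq> X2" "SetB e \<subseteq> X2" "SetC e \<subseteq> X2"
  using e0 e1 by (auto simp: SetA_mem SetB_mem SetC_mem X2_mem)

lemma nu_eq:
  "restr_norm mu2 X2 = uniform_measure lborel X2"
  "restr_norm mu2 (SetA e) = uniform_measure lborel (SetA e)"
  "restr_norm mu2 (SetB e) = uniform_measure lborel (SetB e)"
  "restr_norm mu2 (SetC e) = uniform_measure lborel (SetC e)"
  unfolding restr_norm_def mu2_def
  using em_pos subs by (auto intro!: unif_unif)

lemma e2: "2 * e^2 < 1"
proof -
  have "e^2 \<le> e * 1" using e0 e1 by (simp add: power2_eq_square mult_left_mono)
  then show ?thesis using e1 by simp
qed

abbreviation "aI K \<equiv> (\<integral>x. (G e w x $ 1)^2 \<partial>uniform_measure lborel K)"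
abbreviation "bI K \<equiv> (\<integral>x. (G e w x $ 2)^2 \<partial>uniform_measure lborel K)"

lemma loss_X: "orth_proj 1 P \<Longrightarrow> proj_loss mu2 X2 (fex e w) P = P$2$2 * aI X2 + P$1$1 * bI X2"
  unfolding proj_loss_def nu_eq
  by (rule loss_formula) (use em_pos e0 e1 w2 refl2_X2 in auto)

lemma loss_B: "orth_proj 1 P \<Longrightarrow> proj_loss mu2 (SetB e) (fex e w) P = P$2$2 * aI (SetB e) + P$1$1 * bI (SetB e)"
  unfolding proj_loss_def nu_eq
  by (rule loss_formula) (use em_pos e0 e1 w2 refl2_SetB in auto)

lemma int_G2sq: "integrable (uniform_measure lborel K) (\<lambda>x. (G e w x $ 2)^2)" if "K \<in> sets borel" "emeasure lborel K \<noteq> 0" "emeasure lborel K \<noteq> \<infinity>" for K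
  by (rule integrable_unif[OF that, where B="(w*e^3)*(w*e^3)"]) (use abs_sq_le[OF G2_bound[OF e0, of w]] w2 in auto)
lemma int_G1sq: "integrable (uniform_measure lborel K) (\<lambda>x. (G e w x $ 1)^2)" if "K \<in> sets borel" "emeasure lborel K \<noteq> 0" "emeasure lborel K \<noteq> \<infinity>" for K
  by (rule integrable_unif[OF that, where B="1*1"]) (use abs_sq_le[OF G1_bound[OF e0 e1, of w]] in auto)

lemma bX_le: "bI X2 \<le> w^2 * e^6"
proof (rule unif_integral_le[OF em_pos(1,2) int_G2sq])
  show "AE x in uniform_measure lborel X2. (G e w x $ 2)^2 \<le> w^2 * e^6"
  proof (rule AE_I2)
    fix x
    have "\<bar>(G e w x $ 2)^2\<bar> \<le> (w*e^3)*(w*e^3)" using abs_sq_le[OF G2_bound[OF e0, of w]] w2 by auto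
    moreover have "(w*e^3)*(w*e^3) = w^2 * e^6" by (simp add: eval_nat_numeral algebra_simps)
    ultimately show "(G e w x $ 2)^2 \<le> w^2 * e^6" by simp
  qed
qed (use em_pos in simp_all)

lemma aX_ge: "(1 - 2*e)/2 \<le> aI X2"
proof -
  define R :: "(real^2) set" where "R = cbox (vector [-1, -1]) (vector [-2*e, 1])"
  have Rs: "R \<in> sets borel" unfolding R_def by simp
  have RX: "X2 \<inter> R = R" using e0 by (auto simp: R_def mem_cbox2 X2_mem)
  have mR: "measure lborel R = (1 - 2*e) * 2" unfolding R_def using e1 by (subst measure_cbox2) auto
  have mX: "measure lborel X2 = 4" unfolding X2_def by (subst measure_cbox2) auto
  have "1 * measure (uniform_measure lborel X2) R \<le> aI X2"
  proof (rule unif_integral_ge_box[OF em_pos(1,2) int_G1sq Rs])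
    show "AE x in uniform_measure lborel X2. 1 * indicator R x \<le> (G e w x $ 1)^2"
    proof (rule AE_I2)
      fix x
      show "1 * indicator R x \<le> (G e w x $ 1)^2"
      proof (cases "x \<in> R")
        case True
        then have "x$1 < -e" using e0 by (auto simp: R_def mem_cbox2)
        then show ?thesis using True by (simp add: G1)
      qed simp
    qed
  qed (use em_pos in simp_all)
  moreover have "measure (uniform_measure lborel X2) R = (1 - 2*e)/2"
    using em_pos(1,2) Rs by (simp add: RX mR mX)
  ultimately show ?thesis by simp
qed

lemma aB_le: "aI (SetB e) \<le> 4 * e^4"
proof (rule unif_integral_le[OF em_pos(5,6) int_G1sq])
  show "AE x in uniform_measure lborel (SetB e). (G e w x $ 1)^2 \<le> 4 * e^4"
  proof (rule AE_unif)
    fix x assume x: "x \<in> SetB e"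
    show "(G e w x $ 1)^2 \<le> 4 * e^4"
    proof (cases "-e < x$1 \<and> x$1 < e")
      case True
      have sq: "(x$1)^2 \<le> e^2" using True by (intro power2_le_iff_abs_le[THEN iffD2]) auto
      have a: "\<bar>3*(x$1)^2 - e^2\<bar> \<le> 2 * e^2" using sq zero_le_power2[of "x$1"] zero_le_power2[of e] by linarith
      have "\<bar>(3*(x$1)^2 - e^2) * cos (w*x$2)\<bar> \<le> 2 * e^2 * 1" using a abs_cos_le_one by (intro abs_mult_le) auto
      then have "\<bar>((3*(x$1)^2 - e^2) * cos (w*x$2))^2\<bar> \<le> (2 * e^2 * 1) * (2 * e^2 * 1)" by (rule abs_sq_le)
      then show ?thesis using True by (simp add: G1 power2_eq_square power4_eq_xxxx algebra_simps)
    next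
      case False
      then show ?thesis using x by (auto simp: G1 SetB_mem)
    qed
  qed simp
qed (use em_pos in simp_all)

lemma bB_ge: "9 * w * e^6 / 16384 \<le> bI (SetB e)"
proof -
  define R :: "(real^2) set" where "R = cbox (vector [e/4, 1/w]) (vector [e/2, 2/w])"
  have Rs: "R \<in> sets borel" unfolding R_def by simp
  have w1: "2/w \<le> 1" "0 < 1/w" using w2 by auto
  have RB: "SetB e \<inter> R = R" using e0 e1 by (auto simp: R_def mem_cbox2 SetB_mem) (use w1 in linarith)+
  have mR: "measure lborel R = (e/4) * (1/w)" unfolding R_def using e0 w2 by (subst measure_cbox2) (auto simp: field_simps)
  have mB: "measure lborel (SetB e) = 4 * e" unfolding SetB_def using e0 by (subst measure_cbox2) auto
  define c where "c = w^2 * (9 * e^6 / 256) * (1/4)"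
  have "c * measure (uniform_measure lborel (SetB e)) R \<le> bI (SetB e)"
  proof (rule unif_integral_ge_box[OF em_pos(5,6) int_G2sq Rs])
    show "AE x in uniform_measure lborel (SetB e). c * indicator R x \<le> (G e w x $ 2)^2"
    proof (rule AE_I2)
      fix x
      show "c * indicator R x \<le> (G e w x $ 2)^2"
      proof (cases "x \<in> R")
        case True
        then have x1: "e/4 \<le> x$1" "x$1 \<le> e/2" and x2: "1/w \<le> x$2" "x$2 \<le> 2/w" by (auto simp: R_def mem_cbox2)
        have mid: "-e < x$1 \<and> x$1 < e" using x1 e0 by auto
        have t: "1 \<le> w * x$2" "w * x$2 \<le> 2" using x2 w2 by (auto simp: field_simps)
        have s: "1/2 \<le> sin (w * x$2)" using sin_ge_half[OF t] .
        have s2: "1/4 \<le> (sin (w * x$2))^2"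
          using power_mono[OF s, of 2] by (simp add: power2_eq_square)
        have xa: "e^2/16 \<le> (x$1)^2" using power_mono[OF x1(1), of 2] e0 by (simp add: power_divide)
        have xb: "(x$1)^2 \<le> e^2/4" using power_mono[OF x1(2), of 2] e0 x1 by (simp add: power_divide)
        have d: "3 * e^2 / 4 \<le> e^2 - (x$1)^2" using xb by simp
        have d2: "9 * e^4 / 16 \<le> ((x$1)^2 - e^2)^2"
        proof -
          have "(3 * e^2 / 4)^2 \<le> (e^2 - (x$1)^2)^2" using power_mono[OF d, of 2] e0 by simp
          then show ?thesis by (simp add: power2_eq_square power4_eq_xxxx algebra_simps)
        qed
        have p1: "(e^2/16) * (9 * e^4 / 16) \<le> (x$1)^2 * ((x$1)^2 - e^2)^2"
          using xa d2 by (intro mult_mono) auto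
        have p2: "(w^2 * ((e^2/16) * (9 * e^4 / 16))) * (1/4) \<le> (w^2 * ((x$1)^2 * ((x$1)^2 - e^2)^2)) * (sin (w * x$2))^2"
        proof (rule mult_mono[OF _ s2])
          show "w^2 * ((e^2/16) * (9 * e^4 / 16)) \<le> w^2 * ((x$1)^2 * ((x$1)^2 - e^2)^2)"
            by (rule mult_left_mono[OF p1]) simp
        qed simp_all
        have "(G e w x $ 2)^2 = (w^2 * ((x$1)^2 * ((x$1)^2 - e^2)^2)) * (sin (w * x$2))^2"
          using mid by (simp add: G2 power2_eq_square algebra_simps)
        moreover have "c = (w^2 * ((e^2/16) * (9 * e^4 / 16))) * (1/4)"
          unfolding c_def by (simp add: eval_nat_numeral algebra_simps)
        ultimately show ?thesis using p2 True by simp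
      qed (simp add: c_def)
    qed
  qed (use em_pos in simp_all)
  moreover have "measure (uniform_measure lborel (SetB e)) R = 1 / (16 * w)"
    using em_pos(5,6) Rs e0 w2 by (simp add: RB mR mB field_simps)
  moreover have "c * (1 / (16 * w)) = 9 * w * e^6 / 16384"
    unfolding c_def using w2 by (simp add: power2_eq_square field_simps)
  ultimately show ?thesis by simp
qed


lemma ba_X: "bI X2 < aI X2" using bX_le aX_ge wX by linarith

lemma ab_B: "aI (SetB e) < bI (SetB e)"
proof -
  have "4 * e^4 < 9 * w * e^6 / 16384"
  proof -
    have "e^4 * (65536/9) < e^4 * (w * e^2)" using wB e0 by (intro mult_strict_left_mono) auto
    then show ?thesis by (simp add: eval_nat_numeral algebra_simps)
  qed
  then show ?thesis using aB_le bB_ge by linarith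
qed

lemma optX: "opt_proj mu2 X2 1 (fex e w) E1" "opt_proj mu2 X2 1 (fex e w) P \<Longrightarrow> P = E1"
  using opt_char1[where L="proj_loss mu2 X2 (fex e w)", OF loss_X ba_X] orth_E1
  by (auto simp: opt_proj_def)

lemma optB: "opt_proj mu2 (SetB e) 1 (fex e w) E2" "opt_proj mu2 (SetB e) 1 (fex e w) P \<Longrightarrow> P = E2"
  using opt_char2[where L="proj_loss mu2 (SetB e) (fex e w)", OF loss_B ab_B] orth_E2
  by (auto simp: opt_proj_def)

lemma resid_E1: "(norm ((mat 1 - E1) *v grad (fex e w) x))^2 = (G e w x $ 2)^2"
  by (simp add: norm_resid[OF orth_E1] E1_entries grad_fex[OF e0 e2])

lemma optAC: "opt_proj mu2 (SetA e) 1 (fex e w) E1" "opt_proj mu2 (SetC e) 1 (fex e w) E1"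
proof -
  have z: "proj_loss mu2 S (fex e w) E1 = 0" if S: "S = SetA e \<or> S = SetC e" for S
  proof -
    have "restr_norm mu2 S = uniform_measure lborel S" using S nu_eq by auto
    moreover have "AE x in uniform_measure lborel S. (G e w x $ 2)^2 = 0"
      by (rule AE_unif) (use S e0 in \<open>auto simp: G2 SetA_mem SetC_mem\<close>)
    ultimately show ?thesis unfolding proj_loss_def resid_E1 by (simp add: integral_eq_zero_AE)
  qed
  have nn: "0 \<le> proj_loss mu2 S (fex e w) Q" for S Q
    unfolding proj_loss_def by (rule integral_nonneg_AE) simp
  show "opt_proj mu2 (SetA e) 1 (fex e w) E1" "opt_proj mu2 (SetC e) 1 (fex e w) E1"
    using z nn orth_E1 by (auto simp: opt_proj_def)
qed


lemma f_meas[measurable]: "fex e w \<in> borel_measurable borel"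
  unfolding fex_def by measurable

lemma f_bd: "K \<subseteq> X2 \<Longrightarrow> K \<in> sets borel \<Longrightarrow> AE x in uniform_measure lborel K. \<bar>fex e w x\<bar> \<le> 1"
  by (rule AE_unif) (use fex_bound[OF e0 e1] in auto)

lemma f_int: "K \<subseteq> X2 \<Longrightarrow> K \<in> sets borel \<Longrightarrow> emeasure lborel K \<noteq> 0 \<Longrightarrow> emeasure lborel K \<noteq> \<infinity> \<Longrightarrow>
    integrable (uniform_measure lborel K) (fex e w)"
  by (rule integrable_unif[where B=1]) (auto intro: f_bd)

lemma CE_bound:
  fixes P :: "real^2^2"
  assumes K: "K \<subseteq> X2" "K \<in> sets borel" "emeasure lborel K \<noteq> 0" "emeasure lborel K \<noteq> \<infinity>"
  shows "AE x in uniform_measure lborel K. \<bar>real_cond_exp (uniform_measure lborel K) (proj_sigma (uniform_measure lborel K) P) (fex e w) x\<bar> \<le> 1"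
proof -
  interpret sigma_finite_subalgebra "uniform_measure lborel K" "proj_sigma (uniform_measure lborel K) P"
    using sfs_proj[OF K(3,4)] .
  have fi: "integrable (uniform_measure lborel K) (fex e w)" using f_int[OF K] .
  have fb: "AE x in uniform_measure lborel K. \<bar>fex e w x\<bar> \<le> 1" using f_bd[OF K(1,2)] .
  have "AE x in uniform_measure lborel K. real_cond_exp (uniform_measure lborel K) (proj_sigma (uniform_measure lborel K) P) (fex e w) x \<le> 1"
    by (rule real_cond_exp_le_c[OF fi]) (use fb in \<open>auto elim: AE_mp\<close>)
  moreover have "AE x in uniform_measure lborel K. -1 \<le> real_cond_exp (uniform_measure lborel K) (proj_sigma (uniform_measure lborel K) P) (fex e w) x"
    by (rule real_cond_exp_ge_c[OF fi]) (use fb in \<open>auto elim: AE_mp\<close>)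
  ultimately show ?thesis by eventually_elim auto
qed

lemma CE_meas[measurable]: "real_cond_exp (uniform_measure lborel K) F f \<in> borel_measurable borel"
  using borel_measurable_cond_exp2[of "uniform_measure lborel K" F f] by (simp add: meas_unif_iff)

lemma E2_refl: "E2 *v refl2 x = E2 *v x"
  by (simp add: E2_def matrix_vector_mult_def sum_2 vec_eq_iff forall_2)

lemma CE_B_zero:
  "AE x in uniform_measure lborel (SetB e).
     real_cond_exp (uniform_measure lborel (SetB e)) (proj_sigma (uniform_measure lborel (SetB e)) E2) (fex e w) x = 0"
proof -
  let ?M = "uniform_measure lborel (SetB e)"
  let ?F = "proj_sigma ?M E2"
  interpret sigma_finite_subalgebra ?M ?F using sfs_proj[OF em_pos(5,6)] .
  show ?thesis
  proof (rule real_cond_exp_charact)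
    fix A assume A: "A \<in> sets ?F"
    have "sets ?F = {(\<lambda>x. E2 *v x) -` T \<inter> UNIV | T. T \<in> sets borel}"
      unfolding proj_sigma_def by (subst sets_vimage_algebra2) auto
    then obtain T where T: "A = (\<lambda>x. E2 *v x) -` T" "T \<in> sets borel" using A by auto
    have m: "(\<lambda>x. E2 *v x) \<in> borel_measurable borel"
      by (intro borel_measurable_continuous_onI continuous_intros)
    have Ab: "A \<in> sets borel" using measurable_sets[OF m T(2)] T(1) by simp
    have Asym: "indicator A (refl2 x) = (indicator A x :: real)" for x
      using T(1) by (simp add: E2_refl indicator_def)
    have "(\<integral>x. indicator A x * fex e w x \<partial>?M) = 0"
      by (rule integral_unif_odd[OF _ refl2_SetB]) (use Ab in \<open>auto simp: Asym fex_odd[OF e0]\<close>)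
    then show "(\<integral>x\<in>A. fex e w x \<partial>?M) = (\<integral>x\<in>A. 0 \<partial>?M)"
      by (simp add: set_lebesgue_integral_def)
  qed (use f_int[OF subs(2) sets_boxes(3) em_pos(5,6)] in auto)
qed


definition Jf :: "real^2 \<Rightarrow> real" where
  "Jf x = (if -e < x$1 \<and> x$1 < e then (fex e w x)^2 else 0)"

lemma Jf_meas[measurable]: "Jf \<in> borel_measurable borel"
  unfolding Jf_def by measurable

lemma RHS_le: "(\<integral>x. (fex e w x - cond_exp_proj mu2 (fex e w) E1 x)^2 \<partial>mu2) \<le> (\<integral>x. Jf x \<partial>mu2)"
proof -
  let ?M = "uniform_measure lborel X2"
  let ?F = "proj_sigma ?M E1"
  define \<phi> where "\<phi> t = (if t \<le> -e then t + e else if t < e then 0 else t - e)" for t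
  define g where "g x = \<phi> (x$1)" for x :: "real^2"
  interpret prob_space ?M using prob_unif[OF em_pos(1,2)] .
  have E1v: "(E1 *v x) $ 1 = x $ 1" for x by (simp add: E1_def matrix_vector_mult_def sum_2)
  have phim: "(\<lambda>y::real^2. \<phi> (y$1)) \<in> borel_measurable borel" unfolding \<phi>_def by measurable
  have gF: "g \<in> borel_measurable ?F"
  proof -
    have "(\<lambda>x. E1 *v x) \<in> measurable ?F borel"
      unfolding proj_sigma_def by (rule measurable_vimage_algebra1) simp
    from measurable_compose[OF this phim] show ?thesis unfolding g_def[abs_def] by (simp add: E1v)
  qed
  have gb: "AE x in ?M. \<bar>g x\<bar> \<le> 1"
    by (rule AE_unif) (use e0 in \<open>auto simp: g_def \<phi>_def X2_mem\<close>)
  have "(\<integral>x. (fex e w x - real_cond_exp ?M ?F (fex e w) x)^2 \<partial>?M) \<le> (\<integral>x. (fex e w x - g x)^2 \<partial>?M)"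
    by (rule cond_exp_L2_min[OF sfs_proj[OF em_pos(1,2)] _ _ f_bd[OF _ sets_boxes(1)] gF gb])
       (auto simp: meas_unif finite_measure_axioms)
  moreover have "(fex e w x - g x)^2 = Jf x" for x
    by (auto simp: g_def \<phi>_def Jf_def fex_def)
  ultimately show ?thesis by (simp add: mu2_def cond_exp_proj_def)
qed


lemma LHS_ge:
  fixes PA PC :: "real^2^2"
  shows "(\<integral>x. Jf x \<partial>mu2) \<le> (\<integral>x. (fex e w x - RAS e (fex e w) PA E2 PC x)^2 \<partial>mu2)"
proof -
  let ?M = "uniform_measure lborel X2"
  define CA where "CA = real_cond_exp (uniform_measure lborel (SetA e)) (proj_sigma (uniform_measure lborel (SetA e)) PA) (fex e w)"
  define CB where "CB = real_cond_exp (uniform_measure lborel (SetB e)) (proj_sigma (uniform_measure lborel (SetB e)) E2) (fex e w)"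
  define CC where "CC = real_cond_exp (uniform_measure lborel (SetC e)) (proj_sigma (uniform_measure lborel (SetC e)) PC) (fex e w)"
  have R: "RAS e (fex e w) PA E2 PC x = (if x$1 \<le> -e then CA x else if x$1 < e then CB x else CC x)" for x
    by (simp add: RAS_def cond_exp_proj_def nu_eq CA_def CB_def CC_def)
  have Rm: "(\<lambda>x. RAS e (fex e w) PA E2 PC x) \<in> borel_measurable borel"
    unfolding R CA_def CB_def CC_def by measurable
  have aA: "AE x in ?M. x \<in> SetA e \<longrightarrow> \<bar>CA x\<bar> \<le> 1"
    unfolding CA_def by (rule AE_unif_transfer[OF sets_boxes(2) em_pos(3,4) sets_boxes(1) CE_bound[OF subs(1) sets_boxes(2) em_pos(3,4)]])
  have aB: "AE x in ?M. x \<in> SetB e \<longrightarrow> \<bar>CB x\<bar> \<le> 1"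
    unfolding CB_def by (rule AE_unif_transfer[OF sets_boxes(3) em_pos(5,6) sets_boxes(1) CE_bound[OF subs(2) sets_boxes(3) em_pos(5,6)]])
  have aC: "AE x in ?M. x \<in> SetC e \<longrightarrow> \<bar>CC x\<bar> \<le> 1"
    unfolding CC_def by (rule AE_unif_transfer[OF sets_boxes(4) em_pos(7,8) sets_boxes(1) CE_bound[OF subs(3) sets_boxes(4) em_pos(7,8)]])
  have zB: "AE x in ?M. x \<in> SetB e \<longrightarrow> CB x = 0"
    unfolding CB_def by (rule AE_unif_transfer[OF sets_boxes(3) em_pos(5,6) sets_boxes(1) CE_B_zero])
  have inX: "AE x in ?M. x \<in> X2" by (rule AE_unif) auto
  have fb: "AE x in ?M. \<bar>fex e w x\<bar> \<le> 1" using f_bd[OF _ sets_boxes(1)] by simp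
  have Rb: "AE x in ?M. \<bar>RAS e (fex e w) PA E2 PC x\<bar> \<le> 1"
    using aA aB aC inX
  proof eventually_elim
    case (elim x)
    then show ?case by (auto simp: R X2_mem SetA_mem SetB_mem SetC_mem)
  qed
  have ab: "AE x in ?M. \<bar>(fex e w x - RAS e (fex e w) PA E2 PC x)^2\<bar> \<le> (1 + 1) * (1 + 1)"
    using fb Rb
  proof eventually_elim
    case (elim x)
    then show ?case using abs_diff_sq_le[of "fex e w x" 1 "RAS e (fex e w) PA E2 PC x" 1] by simp
  qed
  have i1: "integrable ?M (\<lambda>x. (fex e w x - RAS e (fex e w) PA E2 PC x)^2)"
    by (rule integrable_unif[OF sets_boxes(1) em_pos(1,2) _ ab]) (use Rm in simp)
  have i2: "integrable ?M Jf"
  proof (rule integrable_unif[OF sets_boxes(1) em_pos(1,2), where B=1])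
    show "AE x in ?M. \<bar>Jf x\<bar> \<le> 1"
      using fb
    proof eventually_elim
      case (elim x)
      then show ?case using abs_sq_le[OF elim] by (simp add: Jf_def)
    qed
  qed simp
  have "AE x in ?M. Jf x \<le> (fex e w x - RAS e (fex e w) PA E2 PC x)^2"
    using zB inX
  proof eventually_elim
    case (elim x)
    show ?case
    proof (cases "-e < x$1 \<and> x$1 < e")
      case True
      then have "x \<in> SetB e" using elim by (auto simp: X2_mem SetB_mem)
      then have "RAS e (fex e w) PA E2 PC x = 0" using True elim by (simp add: R)
      then show ?thesis using True by (simp add: Jf_def)
    next
      case False
      then have "Jf x = 0" unfolding Jf_def by auto
      then show ?thesis by simp
    qed
  qed
  then show ?thesis unfolding mu2_def by (rule integral_mono_AE[OF i2 i1])
qed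


lemma main_ctx:
  shows "0 < e \<and> e < 1 \<and> 0 < w \<and>
    (\<exists>P. opt_proj mu2 X2 1 (fex e w) P) \<and>
    (\<exists>P. opt_proj mu2 (SetA e) 1 (fex e w) P) \<and>
    (\<exists>P. opt_proj mu2 (SetB e) 1 (fex e w) P) \<and>
    (\<exists>P. opt_proj mu2 (SetC e) 1 (fex e w) P) \<and>
    (\<forall>PA PB PC PX.
       opt_proj mu2 (SetA e) 1 (fex e w) PA \<longrightarrow>
       opt_proj mu2 (SetB e) 1 (fex e w) PB \<longrightarrow>
       opt_proj mu2 (SetC e) 1 (fex e w) PC \<longrightarrow>
       opt_proj mu2 X2 1 (fex e w) PX \<longrightarrow>
       (\<integral>x. (fex e w x - RAS e (fex e w) PA PB PC x)\<^sup>2 \<partial>mu2)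
         \<ge> (\<integral>x. (fex e w x - cond_exp_proj mu2 (fex e w) PX x)\<^sup>2 \<partial>mu2))"
proof (intro conjI allI impI)
  show "0 < e" "e < 1" "0 < w" using e0 e1 w2 by auto
  show "\<exists>P. opt_proj mu2 X2 1 (fex e w) P" using optX(1) by blast
  show "\<exists>P. opt_proj mu2 (SetA e) 1 (fex e w) P" using optAC(1) by blast
  show "\<exists>P. opt_proj mu2 (SetB e) 1 (fex e w) P" using optB(1) by blast
  show "\<exists>P. opt_proj mu2 (SetC e) 1 (fex e w) P" using optAC(2) by blast
  fix PA PB PC PX
  assume "opt_proj mu2 (SetB e) 1 (fex e w) PB" "opt_proj mu2 X2 1 (fex e w) PX"
  then have PB: "PB = E2" and PX: "PX = E1" using optB(2) optX(2) by auto
  show "(\<integral>x. (fex e w x - RAS e (fex e w) PA PB PC x)\<^sup>2 \<partial>mu2)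
         \<ge> (\<integral>x. (fex e w x - cond_exp_proj mu2 (fex e w) PX x)\<^sup>2 \<partial>mu2)"
    using RHS_le LHS_ge[of PA PC] unfolding PB PX by linarith
qed

end

theorem corollary1:
  shows "\<exists>\<epsilon> \<omega>::real. 0 < \<epsilon> \<and> \<epsilon> < 1 \<and> 0 < \<omega> \<and>
    (\<exists>P. opt_proj mu2 X2 1 (fex \<epsilon> \<omega>) P) \<and>
    (\<exists>P. opt_proj mu2 (SetA \<epsilon>) 1 (fex \<epsilon> \<omega>) P) \<and>
    (\<exists>P. opt_proj mu2 (SetB \<epsilon>) 1 (fex \<epsilon> \<omega>) P) \<and>
    (\<exists>P. opt_proj mu2 (SetC \<epsilon>) 1 (fex \<epsilon> \<omega>) P) \<and>
    (\<forall>PA PB PC PX.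
       opt_proj mu2 (SetA \<epsilon>) 1 (fex \<epsilon> \<omega>) PA \<longrightarrow>
       opt_proj mu2 (SetB \<epsilon>) 1 (fex \<epsilon> \<omega>) PB \<longrightarrow>
       opt_proj mu2 (SetC \<epsilon>) 1 (fex \<epsilon> \<omega>) PC \<longrightarrow>
       opt_proj mu2 X2 1 (fex \<epsilon> \<omega>) PX \<longrightarrow>
       (\<integral>x. (fex \<epsilon> \<omega> x - RAS \<epsilon> (fex \<epsilon> \<omega>) PA PB PC x)\<^sup>2 \<partial>mu2)
         \<ge> (\<integral>x. (fex \<epsilon> \<omega> x - cond_exp_proj mu2 (fex \<epsilon> \<omega>) PX x)\<^sup>2 \<partial>mu2))"
proof -
  have "0 < (1/100000::real)" "(1/100000::real) \<le> 1/100" "2 \<le> (80000000000000::real)"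
    "65536/9 < (80000000000000::real) * (1/100000)^2"
    "(80000000000000::real)^2 * (1/100000)^6 < (1 - 2*(1/100000))/2"
    by (simp_all add: power_divide)
  from main_ctx[OF this] show ?thesis by blast
qed

end
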